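(* Let $G$ be an $(N,k)$ Adinkra obtained from an $N$-cube Adinkra by quotienting by a doubly even $(N,k)$ code $C$, so that its vertices are labeled by cosets $x+C\in\mathbb{Z}_2^N/C$. Let $D$ be a standard form generating set of $C$. For two vertices $x+C$ and $y+C$, there exists an automorphism of $G$ disregarding vertex coloring (i.e. ignoring both heights and the boson/fermion bipartition) mapping $x+C$ to $y+C$ if and only if $\langle x,c\rangle\equiv\langle y,c\rangle\pmod 2$ for every $c\in D$.
   Context: An Adinkra of dimension $N$ is a finite connected simple graph $G=(V,E)$ with: a bipartition of $V$ into bosons and fermions (every edge joins a boson and a fermion); a height function $\mathrm{hgt}:V\to\mathbb{Z}$ with adjacent vertices at heights differing by $1$; a coloring of $E$ by colors $\{1,\dots,N\}$ such that each vertex is incident to exactly one edge of each color; an edge parity $\pi:E\to\mathbb{Z}_2$ (parity $1$ = dashed); such that every path with edge colors $(i,j)$, $i\ne j$, lies in a unique 4-cycle with colors $(i,j,i,j)$, each having an odd number of dashed edges. If $|V|=2^{N-k}$, $G$ is an $(N,k)$ Adinkra. Switching a vertex reverses the parity of its incident edges. A doubly even $(N,k)$ code $C$ is a $k$-dimensional subspace of $\mathbb{Z}_2^N$ all of whose elements have weight $\equiv0\pmod4$; $\langle u,v\rangle=\sum_i u_iv_i \bmod 2$, and $C$ is self-orthogonal. A standard form generating set of $C$ is a basis $g_1,\dots,g_k$ of $C$ such that for some $k$ coordinates the restrictions of the $g_i$ to these coordinates form the $k\times k$ identity matrix. Quotient construction: label the vertices of an $N$-cube Adinkra by $\mathbb{Z}_2^N$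 so that color-$i$ edges join $v$ and $v+e_i$, and (when vertices differing by elements of $C$ have matching edge parities) identify vertices whose labels differ by elements of $C$; the result has vertices $x+C$, color-$i$ edges joining $x+C$ and $x+e_i+C$, and $\langle x,c\rangle$ for $c\in C$ depends only on the coset. An automorphism disregarding vertex coloring is a permutation of $V$ preserving adjacency and edge colors which becomes parity-preserving after switching some set of vertices. *)

theory Defs
  imports Main
begin

definition vecs :: "nat \<Rightarrow> (nat \<Rightarrow> bool) set" where
  "vecs N = {x. \<forall>i. x i \<longrightarrow> i \<in> {1..N}}"

definition vadd :: "(nat \<Rightarrow> bool) \<Rightarrow> (nat \<Rightarrow> bool) \<Rightarrow> (nat \<Rightarrow> bool)" where
  "vadd x y = (\<lambda>i. x i \<noteq> y i)"

definition vzero :: "nat \<Rightarrow> bool" where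
  "vzero = (\<lambda>i. False)"

definition unitv :: "nat \<Rightarrow> (nat \<Rightarrow> bool)" where
  "unitv i = (\<lambda>j. j = i)"

definition weight :: "nat \<Rightarrow> (nat \<Rightarrow> bool) \<Rightarrow> nat" where
  "weight N x = card {i\<in>{1..N}. x i}"

definition ip :: "nat \<Rightarrow> (nat \<Rightarrow> bool) \<Rightarrow> (nat \<Rightarrow> bool) \<Rightarrow> nat" where
  "ip N u v = card {i\<in>{1..N}. u i \<and> v i} mod 2"

definition vsum :: "(nat \<Rightarrow> bool) set \<Rightarrow> (nat \<Rightarrow> bool)" where
  "vsum S = (\<lambda>i. odd (card {v\<in>S. v i}))"

definition z2_span :: "(nat \<Rightarrow> bool) set \<Rightarrow> (nat \<Rightarrow> bool) set" where
  "z2_span B = {vsum S | S. S \<subseteq> B}"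

definition z2_indep :: "(nat \<Rightarrow> bool) set \<Rightarrow> bool" where
  "z2_indep B \<longleftrightarrow> (\<forall>S\<subseteq>B. vsum S = vzero \<longrightarrow> S = {})"

definition subspace_dim :: "nat \<Rightarrow> nat \<Rightarrow> (nat \<Rightarrow> bool) set \<Rightarrow> bool" where
  "subspace_dim N k C \<longleftrightarrow>
     C \<subseteq> vecs N \<and> vzero \<in> C \<and> (\<forall>x\<in>C. \<forall>y\<in>C. vadd x y \<in> C) \<and>
     (\<exists>B. finite B \<and> B \<subseteq> C \<and> z2_indep B \<and> z2_span B = C \<and> card B = k)"

text \<open>Doubly even (N,k) code (doubly even codes are self-orthogonal).\<close>
definition doubly_even_code :: "nat \<Rightarrow> nat \<Rightarrow> (nat \<Rightarrow> bool) set \<Rightarrow> bool" where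
  "doubly_even_code N k C \<longleftrightarrow>
     subspace_dim N k C \<and> (\<forall>c\<in>C. weight N c mod 4 = 0) \<and>
     (\<forall>u\<in>C. \<forall>v\<in>C. ip N u v = 0)"

definition standard_form_gen :: "nat \<Rightarrow> nat \<Rightarrow> (nat \<Rightarrow> bool) set \<Rightarrow> (nat \<Rightarrow> bool) list \<Rightarrow> bool" where
  "standard_form_gen N k C D \<longleftrightarrow>
     length D = k \<and> distinct D \<and> set D \<subseteq> C \<and> z2_indep (set D) \<and> z2_span (set D) = C \<and>
     (\<exists>J. length J = k \<and> distinct J \<and> set J \<subseteq> {1..N} \<and>
          (\<forall>a<k. \<forall>b<k. (D ! a) (J ! b) = (a = b)))"

definition adj_rel :: "'v set set \<Rightarrow> ('v \<times> 'v) set" where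
  "adj_rel E = {(u,v). {u,v} \<in> E}"

definition is_adinkra ::
  "nat \<Rightarrow> 'v set \<Rightarrow> 'v set set \<Rightarrow> ('v set \<Rightarrow> nat) \<Rightarrow> ('v set \<Rightarrow> bool)
     \<Rightarrow> ('v \<Rightarrow> bool) \<Rightarrow> ('v \<Rightarrow> int) \<Rightarrow> bool" where
  "is_adinkra N V E col par boson hgt \<longleftrightarrow>
     finite V \<and> V \<noteq> {} \<and>
     E \<subseteq> {{u,v} | u v. u \<in> V \<and> v \<in> V \<and> u \<noteq> v} \<and>
     (\<forall>u\<in>V. \<forall>v\<in>V. (u,v) \<in> (adj_rel E)\<^sup>*) \<and>
     (\<forall>u v. {u,v} \<in> E \<longrightarrow> boson u \<noteq> boson v) \<and>
     (\<forall>u v. {u,v} \<in> E \<longrightarrow> \<bar>hgt u - hgt v\<bar> = 1) \<and>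
     (\<forall>e\<in>E. col e \<in> {1..N}) \<and>
     (\<forall>v\<in>V. \<forall>i\<in>{1..N}. \<exists>!e. e \<in> E \<and> v \<in> e \<and> col e = i) \<and>
     (\<forall>u v w i j. {u,v} \<in> E \<and> {v,w} \<in> E \<and> col {u,v} = i \<and> col {v,w} = j \<and> i \<noteq> j \<longrightarrow>
        (\<exists>!x. {w,x} \<in> E \<and> col {w,x} = i \<and> {x,u} \<in> E \<and> col {x,u} = j) \<and>
        (\<forall>x. {w,x} \<in> E \<and> col {w,x} = i \<and> {x,u} \<in> E \<and> col {x,u} = j \<longrightarrow>
             odd (card {e \<in> {{u,v},{v,w},{w,x},{x,u}}. par e})))"

text \<open>Automorphism disregarding vertex coloring: a permutation of V preserving
  adjacency and edge colors which is parity-preserving after switching a set S of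
  vertices (switching S reverses the parity of every edge once for each endpoint in S).\<close>
definition aut_disregarding_coloring ::
  "'v set \<Rightarrow> 'v set set \<Rightarrow> ('v set \<Rightarrow> nat) \<Rightarrow> ('v set \<Rightarrow> bool) \<Rightarrow> ('v \<Rightarrow> 'v) \<Rightarrow> bool" where
  "aut_disregarding_coloring V E col par \<sigma> \<longleftrightarrow>
     bij_betw \<sigma> V V \<and>
     (\<forall>u\<in>V. \<forall>v\<in>V. {\<sigma> u, \<sigma> v} \<in> E \<longleftrightarrow> {u,v} \<in> E) \<and>
     (\<forall>e\<in>E. col (\<sigma> ` e) = col e) \<and>
     (\<exists>S\<subseteq>V. \<forall>e\<in>E. (par (\<sigma> ` e) \<noteq> odd (card (\<sigma> ` e \<inter> S))) = par e)"

definition cube_E :: "nat \<Rightarrow> (nat \<Rightarrow> bool) set set" where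
  "cube_E N = {{x, vadd x (unitv i)} | x i. x \<in> vecs N \<and> i \<in> {1..N}}"

definition cube_col :: "nat \<Rightarrow> (nat \<Rightarrow> bool) set \<Rightarrow> nat" where
  "cube_col N e = (THE i. i \<in> {1..N} \<and> (\<exists>x. e = {x, vadd x (unitv i)}))"

definition coset :: "(nat \<Rightarrow> bool) set \<Rightarrow> (nat \<Rightarrow> bool) \<Rightarrow> (nat \<Rightarrow> bool) set" where
  "coset C x = (\<lambda>c. vadd x c) ` C"

definition quot_V :: "nat \<Rightarrow> (nat \<Rightarrow> bool) set \<Rightarrow> (nat \<Rightarrow> bool) set set" where
  "quot_V N C = coset C ` vecs N"

definition quot_E :: "nat \<Rightarrow> (nat \<Rightarrow> bool) set \<Rightarrow> (nat \<Rightarrow> bool) set set set" where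
  "quot_E N C = {{coset C x, coset C (vadd x (unitv i))} | x i. x \<in> vecs N \<and> i \<in> {1..N}}"

definition quot_col :: "nat \<Rightarrow> (nat \<Rightarrow> bool) set \<Rightarrow> (nat \<Rightarrow> bool) set set \<Rightarrow> nat" where
  "quot_col N C e = (THE i. i \<in> {1..N} \<and>
      (\<exists>x\<in>vecs N. e = {coset C x, coset C (vadd x (unitv i))}))"

definition quot_par :: "nat \<Rightarrow> (nat \<Rightarrow> bool) set \<Rightarrow> ((nat \<Rightarrow> bool) set \<Rightarrow> bool)
    \<Rightarrow> (nat \<Rightarrow> bool) set set \<Rightarrow> bool" where
  "quot_par N C par e = par (SOME f. f \<in> cube_E N \<and>
      (\<exists>x y. f = {x, y} \<and> e = {coset C x, coset C y}))"

definition parity_compatible :: "nat \<Rightarrow> (nat \<Rightarrow> bool) set \<Rightarrow> ((nat \<Rightarrow> bool) set \<Rightarrow> bool) \<Rightarrow> bool" where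
  "parity_compatible N C par \<longleftrightarrow>
     (\<forall>x\<in>vecs N. \<forall>i\<in>{1..N}. \<forall>c\<in>C.
        par {x, vadd x (unitv i)} = par {vadd x c, vadd (vadd x c) (unitv i)})"

end

theory Submission
  imports Defs
begin

abbreviation e :: "nat \<Rightarrow> nat \<Rightarrow> bool" where "e \<equiv> unitv"

lemma vadd_comm: "vadd x y = vadd y x" by (auto simp: vadd_def fun_eq_iff)
lemma vadd_assoc: "vadd (vadd x y) z = vadd x (vadd y z)" by (auto simp: vadd_def fun_eq_iff)
lemma vadd_left_comm: "vadd x (vadd y z) = vadd y (vadd x z)" by (auto simp: vadd_def fun_eq_iff)
lemma vadd_self[simp]: "vadd x x = vzero" by (auto simp: vadd_def vzero_def fun_eq_iff)
lemma vadd_zero[simp]: "vadd x vzero = x" "vadd vzero x = x" by (auto simp: vadd_def vzero_def fun_eq_iff)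
lemma vadd_cancel[simp]: "vadd x (vadd x y) = y" "vadd (vadd y x) x = y" "vadd x (vadd y x) = y" "vadd (vadd x y) x = y"
  by (auto simp: vadd_def fun_eq_iff)
lemmas vadd_ac = vadd_comm vadd_assoc vadd_left_comm

lemma vecs_add[simp]: "x \<in> vecs N \<Longrightarrow> y \<in> vecs N \<Longrightarrow> vadd x y \<in> vecs N"
  by (auto simp: vecs_def vadd_def)
lemma vecs_e[simp]: "i \<in> {1..N} \<Longrightarrow> unitv i \<in> vecs N"
  by (auto simp: vecs_def unitv_def)
lemma vecs_zero[simp]: "vzero \<in> vecs N" by (auto simp: vecs_def vzero_def)

lemma e_neq_zero: "vadd x (unitv i) \<noteq> x"
  by (auto simp: vadd_def unitv_def fun_eq_iff)

lemma card_xor_parity: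
  assumes "finite A"
  shows "odd (card {t\<in>A. P t \<noteq> Q t}) = (odd (card {t\<in>A. P t}) \<noteq> odd (card {t\<in>A. Q t}))"
proof -
  have u1: "{t\<in>A. P t} = {t\<in>A. P t \<and> \<not> Q t} \<union> {t\<in>A. P t \<and> Q t}" by auto
  have u2: "{t\<in>A. Q t} = {t\<in>A. Q t \<and> \<not> P t} \<union> {t\<in>A. P t \<and> Q t}" by auto
  have u3: "{t\<in>A. P t \<noteq> Q t} = {t\<in>A. P t \<and> \<not> Q t} \<union> {t\<in>A. Q t \<and> \<not> P t}" by auto
  have c1: "card {t\<in>A. P t} = card {t\<in>A. P t \<and> \<not> Q t} + card {t\<in>A. P t \<and> Q t}"
    unfolding u1 by (rule card_Un_disjoint) (use assms in auto)
  have c2: "card {t\<in>A. Q t} = card {t\<in>A. Q t \<and> \<not> P t} + card {t\<in>A. P t \<and> Q t}"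
    unfolding u2 by (rule card_Un_disjoint) (use assms in auto)
  have c3: "card {t\<in>A. P t \<noteq> Q t} = card {t\<in>A. P t \<and> \<not> Q t} + card {t\<in>A. Q t \<and> \<not> P t}"
    unfolding u3 by (rule card_Un_disjoint) (use assms in auto)
  show ?thesis unfolding c1 c2 c3 by (auto simp: even_add)
qed

lemma vecs_induct_aux:
  assumes x0: "x0 \<in> vecs N" and base: "P x0"
    and step: "\<And>z i. z \<in> vecs N \<Longrightarrow> i \<in> {1..N} \<Longrightarrow> P z \<Longrightarrow> P (vadd z (unitv i))"
  shows "\<forall>z\<in>vecs N. card {i\<in>{1..N}. z i \<noteq> x0 i} = n \<longrightarrow> P z"
proof (induction n)
  case 0
  show ?case
  proof (intro ballI impI)
    fix z assume z: "z \<in> vecs N" and c: "card {i \<in> {1..N}. z i \<noteq> x0 i} = 0"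
    have "z = x0"
    proof
      fix i show "z i = x0 i"
      proof (cases "i \<in> {1..N}")
        case True then show ?thesis using c by auto
      next
        case False then show ?thesis using z x0 by (auto simp: vecs_def)
      qed
    qed
    then show "P z" using base by simp
  qed
next
  case (Suc n)
  show ?case
  proof (intro ballI impI)
    fix z assume z: "z \<in> vecs N" and c: "card {i \<in> {1..N}. z i \<noteq> x0 i} = Suc n"
    have "{i \<in> {1..N}. z i \<noteq> x0 i} \<noteq> {}" using c by (metis card.empty nat.distinct(1))
    then obtain i where i: "i \<in> {1..N}" "z i \<noteq> x0 i" by blast
    define z' where "z' = vadd z (unitv i)"
    have z'v: "z' \<in> vecs N" using z i by (simp add: z'_def)
    have "{j \<in> {1..N}. z' j \<noteq> x0 j} = {j \<in> {1..N}. z j \<noteq> x0 j} - {i}"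
      using i by (auto simp: z'_def vadd_def unitv_def)
    then have "card {j \<in> {1..N}. z' j \<noteq> x0 j} = n" using c i by simp
    then have "P z'" using Suc z'v by blast
    then have "P (vadd z' (unitv i))" using step z'v i by blast
    then show "P z" by (simp add: z'_def)
  qed
qed

lemma vecs_induct:
  assumes x0: "x0 \<in> vecs N" and base: "P x0"
    and step: "\<And>z i. z \<in> vecs N \<Longrightarrow> i \<in> {1..N} \<Longrightarrow> P z \<Longrightarrow> P (vadd z (unitv i))"
    and z: "z \<in> vecs N"
  shows "P z"
  using vecs_induct_aux[OF x0, of P, OF base step] z by blast

lemma vecs_const:
  assumes x0: "x0 \<in> vecs N" and z: "z \<in> vecs N"
    and step: "\<And>z i. z \<in> vecs N \<Longrightarrow> i \<in> {1..N} \<Longrightarrow> f (vadd z (unitv i)) = f z"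
  shows "f z = f x0"
  using vecs_induct[OF x0, of "\<lambda>w. f w = f x0"] step z by auto

definition pp :: "((nat \<Rightarrow> bool) set \<Rightarrow> bool) \<Rightarrow> (nat \<Rightarrow> bool) \<Rightarrow> nat \<Rightarrow> bool" where
  "pp par x i = par {x, vadd x (unitv i)}"

lemma pp_sym: "pp par (vadd x (unitv i)) i = pp par x i"
  by (simp add: pp_def insert_commute)

lemma e_inj: "unitv i = unitv j \<longleftrightarrow> i = j"
  by (auto simp: unitv_def fun_eq_iff)

lemma edge_eq_idx:
  assumes "{x, vadd x (unitv i)} = {z, vadd z (unitv j)}"
  shows "i = j"
proof -
  from assms have "(x = z \<and> vadd x (unitv i) = vadd z (unitv j)) \<or> (x = vadd z (unitv j) \<and> vadd x (unitv i) = z)"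
    by (simp add: doubleton_eq_iff)
  then have "unitv i = unitv j"
    by (auto simp: vadd_def fun_eq_iff)
  then show ?thesis by (simp add: e_inj)
qed

lemma cube_col_eq:
  assumes "i \<in> {1..N}"
  shows "cube_col N {x, vadd x (unitv i)} = i"
  unfolding cube_col_def
proof (rule the_equality)
  show "i \<in> {1..N} \<and> (\<exists>z. {x, vadd x (unitv i)} = {z, vadd z (unitv i)})" using assms by blast
next
  fix j assume "j \<in> {1..N} \<and> (\<exists>z. {x, vadd x (unitv i)} = {z, vadd z (unitv j)})"
  then show "j = i" using edge_eq_idx by metis
qed

lemma cube_edge: "x \<in> vecs N \<Longrightarrow> i \<in> {1..N} \<Longrightarrow> {x, vadd x (unitv i)} \<in> cube_E N"
  by (auto simp: cube_E_def)

lemma filt_ins: "{t \<in> insert a B. P t} = (if P a then insert a {t\<in>B. P t} else {t\<in>B. P t})" by auto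

lemma card4_odd:
  assumes "distinct [a,b,c,d]"
  shows "odd (card {t \<in> {a,b,c,d}. P t}) = (P a \<noteq> (P b \<noteq> (P c \<noteq> P d)))"
  unfolding filt_ins using assms by (cases "P a"; cases "P b"; cases "P c"; cases "P d"; simp)

lemma cube_4cycle:
  assumes cube: "is_adinkra N (vecs N) (cube_E N) (cube_col N) par boson hgt"
    and x: "x \<in> vecs N" and i: "i \<in> {1..N}" and j: "j \<in> {1..N}" and ij: "i \<noteq> j"
  shows "(pp par x i \<noteq> (pp par (vadd x (unitv i)) j \<noteq> (pp par (vadd x (unitv j)) i \<noteq> pp par x j)))"
proof -
  define u where "u = x"
  define v where "v = vadd x (unitv i)"
  define w where "w = vadd v (unitv j)"
  define x' where "x' = vadd x (unitv j)"
  have E1: "{u,v} \<in> cube_E N" "cube_col N {u,v} = i"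
    using cube_edge[OF x i] cube_col_eq[OF i] by (auto simp: u_def v_def)
  have vv: "v \<in> vecs N" using x i by (simp add: v_def)
  have x'v: "x' \<in> vecs N" using x j by (simp add: x'_def)
  have E2: "{v,w} \<in> cube_E N" "cube_col N {v,w} = j"
    using cube_edge[OF vv j] cube_col_eq[OF j] by (auto simp: w_def)
  have wx': "w = vadd x' (unitv i)" by (simp add: w_def v_def x'_def vadd_ac)
  have E3: "{w,x'} \<in> cube_E N" "cube_col N {w,x'} = i"
    using cube_edge[OF x'v i] cube_col_eq[OF i] by (auto simp: wx' insert_commute)
  have ux': "u = vadd x' (unitv j)" by (simp add: u_def x'_def)
  have E4: "{x',u} \<in> cube_E N" "cube_col N {x',u} = j"
    using cube_edge[OF x'v j] cube_col_eq[OF j] by (auto simp: ux')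
  have H: "\<forall>u v w i j. {u,v} \<in> cube_E N \<and> {v,w} \<in> cube_E N \<and> cube_col N {u,v} = i \<and> cube_col N {v,w} = j \<and> i \<noteq> j \<longrightarrow>
        (\<exists>!x. {w,x} \<in> cube_E N \<and> cube_col N {w,x} = i \<and> {x,u} \<in> cube_E N \<and> cube_col N {x,u} = j) \<and>
        (\<forall>x. {w,x} \<in> cube_E N \<and> cube_col N {w,x} = i \<and> {x,u} \<in> cube_E N \<and> cube_col N {x,u} = j \<longrightarrow>
             odd (card {e \<in> {{u,v},{v,w},{w,x},{x,u}}. par e}))"
    using cube unfolding is_adinkra_def by (elim conjE) assumption
  have pre: "{u,v} \<in> cube_E N \<and> {v,w} \<in> cube_E N \<and> cube_col N {u,v} = i \<and> cube_col N {v,w} = j \<and> i \<noteq> j"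
    using E1 E2 ij by simp
  have pre2: "{w,x'} \<in> cube_E N \<and> cube_col N {w,x'} = i \<and> {x',u} \<in> cube_E N \<and> cube_col N {x',u} = j"
    using E3 E4 by simp
  have odd4: "odd (card {e \<in> {{u,v},{v,w},{w,x'},{x',u}}. par e})"
    using conjunct2[OF H[rule_format, OF pre], rule_format, OF pre2] .
  have ne: "\<And>z l. vadd z (unitv l) \<noteq> z" using e_neq_zero by blast
  have ne2: "vadd x (vadd (unitv i) (unitv j)) \<noteq> x"
    using ij by (auto simp: vadd_def unitv_def fun_eq_iff)
  have dist: "distinct [{u,v},{v,w},{w,x'},{x',u}]"
    using ne ne2 ij
    apply (simp add: u_def v_def w_def x'_def doubleton_eq_iff vadd_ac e_inj)
    by (metis vadd_cancel(1) e_inj vadd_comm vadd_left_comm)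
  have "(par {u,v} \<noteq> (par {v,w} \<noteq> (par {w,x'} \<noteq> par {x',u})))"
    using odd4 card4_odd[OF dist, of par] by simp
  moreover have "par {u,v} = pp par x i" by (simp add: pp_def u_def v_def)
  moreover have "par {v,w} = pp par (vadd x (unitv i)) j" by (simp add: pp_def v_def w_def)
  moreover have "par {w,x'} = pp par (vadd x (unitv j)) i" by (simp add: pp_def wx' x'_def insert_commute)
  moreover have "par {x',u} = pp par x j" by (simp add: pp_def ux' x'_def insert_commute)
  ultimately show ?thesis by simp
qed

lemma vecs_mono: "x \<in> vecs N \<Longrightarrow> x \<in> vecs (Suc N)"
  by (auto simp: vecs_def)

lemma cobound_aux:
  fixes d :: "(nat \<Rightarrow> bool) \<Rightarrow> nat \<Rightarrow> bool"
  shows "(\<forall>x\<in>vecs N. \<forall>i\<in>{1..N}. d (vadd x (unitv i)) i = d x i) \<longrightarrow>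
   (\<forall>x\<in>vecs N. \<forall>i\<in>{1..N}. \<forall>j\<in>{1..N}. i \<noteq> j \<longrightarrow>
          (d x i \<noteq> d (vadd x (unitv i)) j) = (d (vadd x (unitv j)) i \<noteq> d x j)) \<longrightarrow>
   (\<exists>h::(nat \<Rightarrow> bool) \<Rightarrow> bool. \<forall>x\<in>vecs N. \<forall>i\<in>{1..N}. d x i = (h x \<noteq> h (vadd x (unitv i))))"
proof (induction N)
  case 0
  then show ?case by simp
next
  case (Suc N)
  define M where "M = Suc N"
  show ?case
  proof (intro impI)
  assume A1: "\<forall>x\<in>vecs (Suc N). \<forall>i\<in>{1..Suc N}. d (vadd x (unitv i)) i = d x i"
  assume A2: "\<forall>x\<in>vecs (Suc N). \<forall>i\<in>{1..Suc N}. \<forall>j\<in>{1..Suc N}. i \<noteq> j \<longrightarrow>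
          (d x i \<noteq> d (vadd x (unitv i)) j) = (d (vadd x (unitv j)) i \<noteq> d x j)"
  have sym: "\<And>x i. x \<in> vecs M \<Longrightarrow> i \<in> {1..M} \<Longrightarrow> d (vadd x (unitv i)) i = d x i"
    using A1 unfolding M_def by blast
  have cyc: "\<And>x i j. x \<in> vecs M \<Longrightarrow> i \<in> {1..M} \<Longrightarrow> j \<in> {1..M} \<Longrightarrow> i \<noteq> j \<Longrightarrow>
          (d x i \<noteq> d (vadd x (unitv i)) j) = (d (vadd x (unitv j)) i \<noteq> d x j)"
    using A2 unfolding M_def by blast
  have p1: "\<forall>x\<in>vecs N. \<forall>i\<in>{1..N}. d (vadd x (unitv i)) i = d x i"
  proof (intro ballI)
    fix x i assume "x \<in> vecs N" "i \<in> {1..N}"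
    then show "d (vadd x (unitv i)) i = d x i" by (intro sym) (auto simp: M_def vecs_mono)
  qed
  have p2: "\<forall>x\<in>vecs N. \<forall>i\<in>{1..N}. \<forall>j\<in>{1..N}. i \<noteq> j \<longrightarrow>
          (d x i \<noteq> d (vadd x (unitv i)) j) = (d (vadd x (unitv j)) i \<noteq> d x j)"
  proof (intro ballI impI)
    fix x i j assume "x \<in> vecs N" "i \<in> {1..N}" "j \<in> {1..N}" "i \<noteq> j"
    then show "(d x i \<noteq> d (vadd x (unitv i)) j) = (d (vadd x (unitv j)) i \<noteq> d x j)"
      by (intro cyc) (auto simp: M_def vecs_mono)
  qed
  note ex = mp[OF mp[OF Suc.IH p1] p2]
  define h0 :: "(nat \<Rightarrow> bool) \<Rightarrow> bool" where "h0 = (SOME h. \<forall>x\<in>vecs N. \<forall>i\<in>{1..N}. d x i = (h x \<noteq> h (vadd x (unitv i))))"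
  have h0: "\<forall>x\<in>vecs N. \<forall>i\<in>{1..N}. d x i = (h0 x \<noteq> h0 (vadd x (unitv i)))"
    unfolding h0_def by (rule someI_ex[OF ex])
  define h where "h x = (h0 (x(M:=False)) \<noteq> (x M \<and> d (x(M:=False)) M))" for x
  have "\<forall>x\<in>vecs M. \<forall>i\<in>{1..M}. d x i = (h x \<noteq> h (vadd x (unitv i)))"
  proof (intro ballI)
    fix x i assume x: "x \<in> vecs M" and i: "i \<in> {1..M}"
    define x' where "x' = x(M:=False)"
    have x'N: "x' \<in> vecs N" using x by (auto simp: vecs_def x'_def M_def le_Suc_eq)
    have x'M: "x' \<in> vecs M" using x'N vecs_mono by (simp add: M_def)
    have MM: "M \<in> {1..M}" by (simp add: M_def)
    have xT: "x M \<Longrightarrow> x = vadd x' (unitv M)" by (auto simp: x'_def vadd_def unitv_def fun_eq_iff)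
    have xF: "\<not> x M \<Longrightarrow> x = x'" by (auto simp: x'_def fun_eq_iff)
    show "d x i = (h x \<noteq> h (vadd x (unitv i)))"
    proof (cases "i = M")
      case True
      have a1: "(vadd x (unitv i))(M:=False) = x'" using True by (auto simp: x'_def vadd_def unitv_def fun_eq_iff)
      have a2: "(vadd x (unitv i)) M = (\<not> x M)" using True by (auto simp: vadd_def unitv_def)
      have "h x \<noteq> h (vadd x (unitv i)) = d x' M"
        unfolding h_def a1 a2 x'_def[symmetric] by auto
      moreover have "d x M = d x' M"
        using xT xF sym[OF x'M MM] by (cases "x M") auto
      ultimately show ?thesis using True by simp
    next
      case False
      then have iN: "i \<in> {1..N}" using i by (auto simp: M_def)
      have a1: "(vadd x (unitv i))(M:=False) = vadd x' (unitv i)" using False by (auto simp: x'_def vadd_def unitv_def fun_eq_iff)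
      have a2: "(vadd x (unitv i)) M = x M" using False by (auto simp: vadd_def unitv_def)
      have "(h x \<noteq> h (vadd x (unitv i))) = ((h0 x' \<noteq> h0 (vadd x' (unitv i))) \<noteq> (x M \<and> (d x' M \<noteq> d (vadd x' (unitv i)) M)))"
        unfolding h_def a1 a2 x'_def[symmetric] by auto
      also have "\<dots> = (d x' i \<noteq> (x M \<and> (d x' M \<noteq> d (vadd x' (unitv i)) M)))"
        using h0 x'N iN by simp
      also have "\<dots> = d x i"
      proof (cases "x M")
        case True
        have "(d x' i \<noteq> d (vadd x' (unitv i)) M) = (d (vadd x' (unitv M)) i \<noteq> d x' M)"
          using cyc[OF x'M i MM False] .
        moreover have "d x i = d (vadd x' (unitv M)) i" using xT True by simp
        ultimately show ?thesis using True by argo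
      next
        case False
        then show ?thesis using xF by simp
      qed
      finally show ?thesis by simp
    qed
  qed
  then show "\<exists>h::(nat \<Rightarrow> bool) \<Rightarrow> bool. \<forall>x\<in>vecs (Suc N). \<forall>i\<in>{1..Suc N}. d x i = (h x \<noteq> h (vadd x (unitv i)))" unfolding M_def by (rule exI[of _ h])
  qed
qed

lemma cobound:
  fixes d :: "(nat \<Rightarrow> bool) \<Rightarrow> nat \<Rightarrow> bool"
  assumes "\<And>x i. x \<in> vecs N \<Longrightarrow> i \<in> {1..N} \<Longrightarrow> d (vadd x (unitv i)) i = d x i"
   and "\<And>x i j. x \<in> vecs N \<Longrightarrow> i \<in> {1..N} \<Longrightarrow> j \<in> {1..N} \<Longrightarrow> i \<noteq> j \<Longrightarrow>
          (d x i \<noteq> d (vadd x (unitv i)) j) = (d (vadd x (unitv j)) i \<noteq> d x j)"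
  shows "\<exists>h::(nat \<Rightarrow> bool) \<Rightarrow> bool. \<forall>x\<in>vecs N. \<forall>i\<in>{1..N}. d x i = (h x \<noteq> h (vadd x (unitv i)))"
proof -
  have p1: "\<forall>x\<in>vecs N. \<forall>i\<in>{1..N}. d (vadd x (unitv i)) i = d x i"
    using assms(1) by blast
  have p2: "\<forall>x\<in>vecs N. \<forall>i\<in>{1..N}. \<forall>j\<in>{1..N}. i \<noteq> j \<longrightarrow>
          (d x i \<noteq> d (vadd x (unitv i)) j) = (d (vadd x (unitv j)) i \<noteq> d x j)"
  proof (intro ballI impI)
    fix x i j assume "x \<in> vecs N" "i \<in> {1..N}" "j \<in> {1..N}" "i \<noteq> j"
    then show "(d x i \<noteq> d (vadd x (unitv i)) j) = (d (vadd x (unitv j)) i \<noteq> d x j)"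
      by (rule assms(2))
  qed
  show ?thesis using mp[OF mp[OF cobound_aux p1] p2] .
qed

definition qq :: "nat \<Rightarrow> nat \<Rightarrow> (nat \<Rightarrow> bool) \<Rightarrow> nat" where
  "qq N i x = card {j\<in>{1..N}. j < i \<and> x j}"

lemma qq_add: "odd (qq N i (vadd x y)) = (odd (qq N i x) \<noteq> odd (qq N i y))"
proof -
  have e: "\<And>P. {j\<in>{1..N}. j < i \<and> P j} = {t\<in>{j\<in>{1..N}. j < i}. P t}" by auto
  show ?thesis unfolding qq_def vadd_def e by (rule card_xor_parity) simp
qed

lemma qq_e: "qq N j (unitv i) = (if i < j \<and> i \<in> {1..N} then 1 else 0)"
proof -
  have "{l\<in>{1..N}. l < j \<and> unitv i l} = (if i < j \<and> i \<in> {1..N} then {i} else {})"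
    by (auto simp: unitv_def)
  then show ?thesis by (simp add: qq_def)
qed

lemma qq_self: "qq N i (vadd x (unitv i)) = qq N i x"
proof -
  have "{j\<in>{1..N}. j < i \<and> vadd x (unitv i) j} = {j\<in>{1..N}. j < i \<and> x j}"
    by (auto simp: vadd_def unitv_def)
  then show ?thesis by (simp add: qq_def)
qed

definition BB :: "nat \<Rightarrow> (nat \<Rightarrow> bool) \<Rightarrow> (nat \<Rightarrow> bool) \<Rightarrow> nat" where
  "BB N x a = card {t\<in>{1..N}\<times>{1..N}. snd t < fst t \<and> x (fst t) \<and> a (snd t)}"

lemma BB_add1: "odd (BB N (vadd x y) a) = (odd (BB N x a) \<noteq> odd (BB N y a))"
proof -
  define A where "A = {t\<in>{1..N}\<times>{1..N}. snd t < fst t \<and> a (snd t)}"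
  have e: "\<And>P. {t\<in>{1..N}\<times>{1..N}. snd t < fst t \<and> P (fst t) \<and> a (snd t)} = {t\<in>A. P (fst t)}"
    by (auto simp: A_def)
  have "odd (card {t\<in>A. x (fst t) \<noteq> y (fst t)}) = (odd (card {t\<in>A. x (fst t)}) \<noteq> odd (card {t\<in>A. y (fst t)}))"
    by (rule card_xor_parity) (simp add: A_def)
  then show ?thesis unfolding BB_def e[of "vadd x y"] e[of x] e[of y] by (simp add: vadd_def)
qed

lemma BB_add2: "odd (BB N a (vadd x y)) = (odd (BB N a x) \<noteq> odd (BB N a y))"
proof -
  define A where "A = {t\<in>{1..N}\<times>{1..N}. snd t < fst t \<and> a (fst t)}"
  have e: "\<And>P. {t\<in>{1..N}\<times>{1..N}. snd t < fst t \<and> a (fst t) \<and> P (snd t)} = {t\<in>A. P (snd t)}"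
    by (auto simp: A_def)
  have "odd (card {t\<in>A. x (snd t) \<noteq> y (snd t)}) = (odd (card {t\<in>A. x (snd t)}) \<noteq> odd (card {t\<in>A. y (snd t)}))"
    by (rule card_xor_parity) (simp add: A_def)
  then show ?thesis unfolding BB_def e[of "vadd x y"] e[of x] e[of y] by (simp add: vadd_def)
qed

lemma BB_zero: "BB N vzero a = 0"
  by (simp add: BB_def vzero_def)

lemma BB_e: assumes "i \<in> {1..N}" shows "BB N (unitv i) a = qq N i a"
proof -
  have "{t\<in>{1..N}\<times>{1..N}. snd t < fst t \<and> unitv i (fst t) \<and> a (snd t)} = (\<lambda>j. (i,j)) ` {j\<in>{1..N}. j < i \<and> a j}"
    using assms by (auto simp: unitv_def)
  moreover have "inj (\<lambda>j::nat. (i,j))" by (auto simp: inj_def)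
  ultimately show ?thesis unfolding BB_def qq_def by (simp add: card_image inj_on_def)
qed

lemma par3: fixes a b c :: nat assumes "even (a + (b + c))" shows "(odd a \<noteq> odd b) = odd c"
  using assms by (cases "even a"; cases "even b"; cases "even c"; simp add: even_add)

lemma BB_swap:
  assumes ev: "even (card {i\<in>{1..N}. c i})"
  shows "(odd (BB N c a) \<noteq> odd (BB N a c)) = odd (card {i\<in>{1..N}. a i \<and> c i})"
proof -
  define X where "X = {t\<in>{1..N}\<times>{1..N}. c (fst t) \<and> a (snd t)}"
  have fX: "finite X" by (simp add: X_def)
  have "X = {i\<in>{1..N}. c i} \<times> {j\<in>{1..N}. a j}" by (auto simp: X_def)
  then have cX: "even (card X)" using ev by (simp add: card_cartesian_product)
  define X1 where "X1 = {t\<in>X. snd t < fst t}"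
  define X2 where "X2 = {t\<in>X. fst t < snd t}"
  define X3 where "X3 = {t\<in>X. fst t = snd t}"
  have "X = X1 \<union> (X2 \<union> X3)" by (auto simp: X1_def X2_def X3_def)
  moreover have "card (X2 \<union> X3) = card X2 + card X3"
    by (rule card_Un_disjoint) (use fX in \<open>auto simp: X2_def X3_def\<close>)
  moreover have "card (X1 \<union> (X2 \<union> X3)) = card X1 + card (X2 \<union> X3)"
    by (rule card_Un_disjoint) (use fX in \<open>auto simp: X1_def X2_def X3_def\<close>)
  ultimately have e1: "card X = card X1 + (card X2 + card X3)" by simp
  have e2: "BB N c a = card X1" unfolding BB_def X1_def X_def by (rule arg_cong[where f=card]) auto
  have e3: "BB N a c = card X2"
  proof -
    have "{t\<in>{1..N}\<times>{1..N}. snd t < fst t \<and> a (fst t) \<and> c (snd t)} = prod.swap ` X2"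
      by (auto simp: X2_def X_def image_iff)
    then show ?thesis unfolding BB_def by (simp add: card_image)
  qed
  have e4: "card X3 = card {i\<in>{1..N}. a i \<and> c i}"
  proof -
    have "X3 = (\<lambda>i. (i,i)) ` {i\<in>{1..N}. a i \<and> c i}" by (auto simp: X3_def X_def)
    then show ?thesis by (simp add: card_image inj_on_def)
  qed
  have s: "BB N c a + (BB N a c + card {i\<in>{1..N}. a i \<and> c i}) = card X"
    using e1 e2 e3 e4 by linarith
  have "even (BB N c a + (BB N a c + card {i\<in>{1..N}. a i \<and> c i}))"
    unfolding s by (rule cX)
  then show ?thesis using par3 by blast
qed

lemma card2_odd: "A \<noteq> B \<Longrightarrow> odd (card ({A,B} \<inter> S)) = ((A \<in> S) \<noteq> (B \<in> S))"
  by (cases "A \<in> S"; cases "B \<in> S"; simp add: Int_insert_left)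

lemma weight_e: "i \<in> {1..N} \<Longrightarrow> weight N (unitv i) = 1"
proof -
  assume i: "i \<in> {1..N}"
  have "{j\<in>{1..N}. unitv i j} = {i}" using i by (auto simp: unitv_def)
  then show ?thesis by (simp add: weight_def)
qed

lemma weight_ee: "i \<in> {1..N} \<Longrightarrow> j \<in> {1..N} \<Longrightarrow> i \<noteq> j \<Longrightarrow> weight N (vadd (unitv i) (unitv j)) = 2"
proof -
  assume i: "i \<in> {1..N}" and j: "j \<in> {1..N}" and ij: "i \<noteq> j"
  have "{l\<in>{1..N}. vadd (unitv i) (unitv j) l} = {i,j}" using i j ij by (auto simp: unitv_def vadd_def)
  then show ?thesis using ij by (simp add: weight_def)
qed

lemma ip_iff:
  "(ip N x c = ip N y c) = even (card {i\<in>{1..N}. vadd x y i \<and> c i})"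
proof -
  define A where "A = {i\<in>{1..N}. c i}"
  have e: "\<And>P. {i\<in>{1..N}. P i \<and> c i} = {i\<in>A. P i}" by (auto simp: A_def)
  have "odd (card {i\<in>A. x i \<noteq> y i}) = (odd (card {i\<in>A. x i}) \<noteq> odd (card {i\<in>A. y i}))"
    by (rule card_xor_parity) (simp add: A_def)
  moreover have "(ip N x c = ip N y c) = (odd (card {i\<in>A. x i}) = odd (card {i\<in>A. y i}))"
    unfolding ip_def e by (simp add: mod2_eq_if)
  moreover have e': "{i\<in>{1..N}. vadd x y i \<and> c i} = {i\<in>A. x i \<noteq> y i}" by (auto simp: A_def vadd_def)
  ultimately show ?thesis unfolding e' by argo
qed

lemma vsum_insert: "finite S \<Longrightarrow> v \<notin> S \<Longrightarrow> vsum (insert v S) = vadd v (vsum S)"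
proof -
  assume f: "finite S" and v: "v \<notin> S"
  show ?thesis
  proof
    fix i
    have "{w\<in>insert v S. w i} = (if v i then insert v {w\<in>S. w i} else {w\<in>S. w i})" by auto
    then show "vsum (insert v S) i = vadd v (vsum S) i"
      using f v by (simp add: vsum_def vadd_def)
  qed
qed

lemma vsum_empty: "vsum {} = vzero" by (simp add: vsum_def vzero_def)

lemma even_span:
  assumes "finite S" "\<forall>v\<in>S. even (card {i\<in>{1..N}. a i \<and> v i})"
  shows "even (card {i\<in>{1..N}. a i \<and> vsum S i})"
  using assms
proof (induction S rule: finite_induct)
  case empty
  then show ?case by (simp add: vsum_empty vzero_def)
next
  case (insert v S)
  define A where "A = {i\<in>{1..N}. a i}"
  have e: "\<And>P. {i\<in>{1..N}. a i \<and> P i} = {i\<in>A. P i}" by (auto simp: A_def)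
  have "odd (card {i\<in>A. v i \<noteq> vsum S i}) = (odd (card {i\<in>A. v i}) \<noteq> odd (card {i\<in>A. vsum S i}))"
    by (rule card_xor_parity) (simp add: A_def)
  moreover have "even (card {i\<in>A. vsum S i})" using insert e by simp
  moreover have "even (card {i\<in>A. v i})" using insert e by simp
  ultimately show ?case unfolding vsum_insert[OF insert(1,2)] e by (simp add: vadd_def)
qed

locale adk =
  fixes N k :: nat and C :: "(nat \<Rightarrow> bool) set" and par :: "(nat \<Rightarrow> bool) set \<Rightarrow> bool"
    and boson :: "(nat \<Rightarrow> bool) \<Rightarrow> bool" and hgt :: "(nat \<Rightarrow> bool) \<Rightarrow> int"
  assumes code: "doubly_even_code N k C"
    and cube: "is_adinkra N (vecs N) (cube_E N) (cube_col N) par boson hgt"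
    and compat: "parity_compatible N C par"
begin

lemma C_sub: "C \<subseteq> vecs N" using code by (simp add: doubly_even_code_def subspace_dim_def)
lemma C_zero: "vzero \<in> C" using code by (simp add: doubly_even_code_def subspace_dim_def)
lemma C_add: "c \<in> C \<Longrightarrow> d \<in> C \<Longrightarrow> vadd c d \<in> C" using code by (simp add: doubly_even_code_def subspace_dim_def)
lemma C_w4: "c \<in> C \<Longrightarrow> weight N c mod 4 = 0" using code by (simp add: doubly_even_code_def)
lemma C_even: "c \<in> C \<Longrightarrow> even (card {i\<in>{1..N}. c i})"
  using C_w4[of c] unfolding weight_def by presburger

lemma e_notin: "i \<in> {1..N} \<Longrightarrow> unitv i \<notin> C"
  using C_w4 weight_e by fastforce

lemma ee_notin: "i \<in> {1..N} \<Longrightarrow> j \<in> {1..N} \<Longrightarrow> i \<noteq> j \<Longrightarrow> vadd (unitv i) (unitv j) \<notin> C"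
  using C_w4 weight_ee by fastforce

lemma coset_eq: "coset C u = coset C v \<longleftrightarrow> vadd u v \<in> C"
proof
  assume h: "coset C u = coset C v"
  have "u \<in> coset C u" unfolding coset_def using C_zero by (metis image_eqI vadd_zero(1))
  then have "u \<in> coset C v" using h by simp
  then obtain c where "c \<in> C" "u = vadd v c" by (auto simp: coset_def)
  then show "vadd u v \<in> C" by (simp add: vadd_ac)
next
  assume h: "vadd u v \<in> C"
  show "coset C u = coset C v"
  proof
    show "coset C u \<subseteq> coset C v"
    proof
      fix w assume "w \<in> coset C u"
      then obtain c where c: "c \<in> C" "w = vadd u c" by (auto simp: coset_def)
      have "w = vadd v (vadd (vadd u v) c)" using c by (simp add: vadd_ac)
      moreover have "vadd (vadd u v) c \<in> C" using C_add h c by simp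
      ultimately show "w \<in> coset C v" by (auto simp: coset_def)
    qed
  next
    show "coset C v \<subseteq> coset C u"
    proof
      fix w assume "w \<in> coset C v"
      then obtain c where c: "c \<in> C" "w = vadd v c" by (auto simp: coset_def)
      have "w = vadd u (vadd (vadd u v) c)" using c by (simp add: vadd_ac)
      moreover have "vadd (vadd u v) c \<in> C" using C_add h c by simp
      ultimately show "w \<in> coset C u" by (auto simp: coset_def)
    qed
  qed
qed

lemma coset_shift: "coset C u = coset C v \<Longrightarrow> coset C (vadd u w) = coset C (vadd v w)"
proof -
  assume "coset C u = coset C v"
  then have "vadd u v \<in> C" by (simp add: coset_eq)
  moreover have "vadd (vadd u w) (vadd v w) = vadd u v" by (simp add: vadd_ac)
  ultimately show ?thesis by (simp add: coset_eq)
qed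

lemma coset_edge_neq: "i \<in> {1..N} \<Longrightarrow> coset C z \<noteq> coset C (vadd z (unitv i))"
  using e_notin by (simp add: coset_eq vadd_ac)

lemma quot_edge_idx:
  assumes i: "i \<in> {1..N}" and j: "j \<in> {1..N}"
    and h: "{coset C z, coset C (vadd z (unitv i))} = {coset C w, coset C (vadd w (unitv j))}"
  shows "i = j"
proof (rule ccontr)
  assume ij: "i \<noteq> j"
  from h have "(coset C z = coset C w \<and> coset C (vadd z (unitv i)) = coset C (vadd w (unitv j))) \<or>
     (coset C z = coset C (vadd w (unitv j)) \<and> coset C (vadd z (unitv i)) = coset C w)"
    by (simp add: doubleton_eq_iff)
  then have "vadd (unitv i) (unitv j) \<in> C"
  proof
    assume "coset C z = coset C w \<and> coset C (vadd z (unitv i)) = coset C (vadd w (unitv j))"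
    then have "vadd z w \<in> C" "vadd (vadd z (unitv i)) (vadd w (unitv j)) \<in> C" by (simp_all add: coset_eq)
    then have "vadd (vadd z w) (vadd (vadd z (unitv i)) (vadd w (unitv j))) \<in> C" by (rule C_add)
    moreover have "vadd (vadd z w) (vadd (vadd z (unitv i)) (vadd w (unitv j))) = vadd (unitv i) (unitv j)"
      by (simp add: vadd_ac)
    ultimately show ?thesis by simp
  next
    assume "coset C z = coset C (vadd w (unitv j)) \<and> coset C (vadd z (unitv i)) = coset C w"
    then have "vadd z (vadd w (unitv j)) \<in> C" "vadd (vadd z (unitv i)) w \<in> C" by (simp_all add: coset_eq)
    then have "vadd (vadd z (vadd w (unitv j))) (vadd (vadd z (unitv i)) w) \<in> C" by (rule C_add)
    moreover have "vadd (vadd z (vadd w (unitv j))) (vadd (vadd z (unitv i)) w) = vadd (unitv i) (unitv j)"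
      by (simp add: vadd_ac)
    ultimately show ?thesis by simp
  qed
  then show False using ee_notin i j ij by blast
qed

lemma quot_col_eq:
  assumes i: "i \<in> {1..N}" and z: "z \<in> vecs N"
  shows "quot_col N C {coset C z, coset C (vadd z (unitv i))} = i"
  unfolding quot_col_def
proof (rule the_equality)
  show "i \<in> {1..N} \<and> (\<exists>x\<in>vecs N. {coset C z, coset C (vadd z (unitv i))} = {coset C x, coset C (vadd x (unitv i))})"
    using i z by blast
next
  fix j assume "j \<in> {1..N} \<and> (\<exists>x\<in>vecs N. {coset C z, coset C (vadd z (unitv i))} = {coset C x, coset C (vadd x (unitv j))})"
  then show "j = i" using quot_edge_idx i by metis
qed


lemma pp_compat: "x \<in> vecs N \<Longrightarrow> i \<in> {1..N} \<Longrightarrow> c \<in> C \<Longrightarrow> pp par (vadd x c) i = pp par x i"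
  using compat unfolding parity_compatible_def pp_def by metis

lemma quot_E_edge: "z \<in> vecs N \<Longrightarrow> i \<in> {1..N} \<Longrightarrow> {coset C z, coset C (vadd z (unitv i))} \<in> quot_E N C"
  unfolding quot_E_def by blast

lemma quot_E_cases: "ed \<in> quot_E N C \<Longrightarrow> \<exists>z i. z \<in> vecs N \<and> i \<in> {1..N} \<and> ed = {coset C z, coset C (vadd z (unitv i))}"
  unfolding quot_E_def by blast

lemma quot_par_eq:
  assumes z: "z \<in> vecs N" and i: "i \<in> {1..N}"
  shows "quot_par N C par {coset C z, coset C (vadd z (unitv i))} = pp par z i"
proof -
  define ed where "ed = {coset C z, coset C (vadd z (unitv i))}"
  define P where "P f = (f \<in> cube_E N \<and> (\<exists>x y. f = {x, y} \<and> ed = {coset C x, coset C y}))" for f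
  have "P {z, vadd z (unitv i)}" unfolding P_def ed_def using cube_edge[OF z i] by blast
  then have Pf: "P (SOME f. P f)" by (rule someI)
  define f where "f = (SOME f. P f)"
  have Pf': "P f" unfolding f_def by (rule Pf)
  have qp: "quot_par N C par ed = par f" unfolding quot_par_def f_def P_def by simp
  have fE: "f \<in> cube_E N" and fex: "\<exists>x y. f = {x, y} \<and> ed = {coset C x, coset C y}"
    using Pf' unfolding P_def by simp_all
  from fE obtain w j where w: "w \<in> vecs N" and j: "j \<in> {1..N}" and fw: "f = {w, vadd w (unitv j)}"
    unfolding cube_E_def by blast
  from fex obtain u v where uv: "f = {u, v}" and euv: "ed = {coset C u, coset C v}"
    by blast
  have "(u = w \<and> v = vadd w (unitv j)) \<or> (u = vadd w (unitv j) \<and> v = w)"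
    using uv fw by (auto simp: doubleton_eq_iff)
  then have ew: "ed = {coset C w, coset C (vadd w (unitv j))}" using euv by (auto simp: insert_commute)
  then have "{coset C z, coset C (vadd z (unitv i))} = {coset C w, coset C (vadd w (unitv j))}" using ed_def by simp
  then have ji: "j = i" using quot_edge_idx[OF i j] by metis
  have "(coset C z = coset C w \<and> coset C (vadd z (unitv i)) = coset C (vadd w (unitv i))) \<or>
     (coset C z = coset C (vadd w (unitv i)) \<and> coset C (vadd z (unitv i)) = coset C w)"
    using ew ed_def ji by (simp add: doubleton_eq_iff)
  then have "pp par w i = pp par z i"
  proof
    assume "coset C z = coset C w \<and> coset C (vadd z (unitv i)) = coset C (vadd w (unitv i))"
    then have c: "vadd z w \<in> C" by (simp add: coset_eq)
    have "w = vadd z (vadd z w)" by simp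
    then show ?thesis using pp_compat[OF z i c] by simp
  next
    assume "coset C z = coset C (vadd w (unitv i)) \<and> coset C (vadd z (unitv i)) = coset C w"
    then have c: "vadd z (vadd w (unitv i)) \<in> C" by (simp add: coset_eq)
    have "vadd w (unitv i) = vadd z (vadd z (vadd w (unitv i)))" by simp
    then have "pp par (vadd w (unitv i)) i = pp par z i" using pp_compat[OF z i c] by simp
    then show ?thesis by (simp add: pp_sym)
  qed
  moreover have "par f = pp par w i" using fw ji by (simp add: pp_def)
  ultimately show ?thesis using qp ed_def by simp
qed

lemma qq_cycle:
  assumes "i \<in> {1..N}" "j \<in> {1..N}" "i \<noteq> j"
  shows "odd (qq N i x) \<noteq> (odd (qq N j (vadd x (unitv i))) \<noteq> (odd (qq N i (vadd x (unitv j))) \<noteq> odd (qq N j x)))"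
proof -
  have a: "odd (qq N j (vadd x (unitv i))) = (odd (qq N j x) \<noteq> (i < j))"
    using assms by (simp add: qq_add qq_e)
  have b: "odd (qq N i (vadd x (unitv j))) = (odd (qq N i x) \<noteq> (j < i))"
    using assms by (simp add: qq_add qq_e)
  have c: "(i < j) \<noteq> (j < i)" using assms by auto
  show ?thesis unfolding a b using c by argo
qed

definition dd :: "(nat \<Rightarrow> bool) \<Rightarrow> nat \<Rightarrow> bool" where
  "dd x i = (pp par x i \<noteq> odd (qq N i x))"

lemma s_exists: "\<exists>s::(nat \<Rightarrow> bool) \<Rightarrow> bool. \<forall>x\<in>vecs N. \<forall>i\<in>{1..N}. dd x i = (s x \<noteq> s (vadd x (unitv i)))"
proof (rule cobound)
  fix x i assume "x \<in> vecs N" "i \<in> {1..N}"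
  show "dd (vadd x (unitv i)) i = dd x i" unfolding dd_def by (simp add: pp_sym qq_self)
next
  fix x i j assume x: "x \<in> vecs N" and i: "i \<in> {1..N}" and j: "j \<in> {1..N}" and ij: "i \<noteq> j"
  note p = cube_4cycle[OF cube x i j ij]
  note q = qq_cycle[OF i j ij, of x]
  show "(dd x i \<noteq> dd (vadd x (unitv i)) j) = (dd (vadd x (unitv j)) i \<noteq> dd x j)"
    unfolding dd_def using p q by argo
qed

definition s :: "(nat \<Rightarrow> bool) \<Rightarrow> bool" where
  "s = (SOME s. \<forall>x\<in>vecs N. \<forall>i\<in>{1..N}. dd x i = (s x \<noteq> s (vadd x (unitv i))))"

lemma pdecomp: "x \<in> vecs N \<Longrightarrow> i \<in> {1..N} \<Longrightarrow> pp par x i = (odd (qq N i x) \<noteq> (s x \<noteq> s (vadd x (unitv i))))"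
proof -
  assume x: "x \<in> vecs N" and i: "i \<in> {1..N}"
  have "\<forall>x\<in>vecs N. \<forall>i\<in>{1..N}. dd x i = (s x \<noteq> s (vadd x (unitv i)))"
    unfolding s_def by (rule someI_ex[OF s_exists])
  then have "dd x i = (s x \<noteq> s (vadd x (unitv i)))" using x i by blast
  then show ?thesis unfolding dd_def by argo
qed

definition G :: "(nat \<Rightarrow> bool) \<Rightarrow> (nat \<Rightarrow> bool) \<Rightarrow> bool" where
  "G a z = (odd (BB N z a) \<noteq> (s (vadd z a) \<noteq> s z))"

lemma F1:
  assumes a: "a \<in> vecs N" and z: "z \<in> vecs N" and i: "i \<in> {1..N}"
  shows "(pp par (vadd z a) i \<noteq> pp par z i) = (G a z \<noteq> G a (vadd z (unitv i)))"
proof -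
  have za: "vadd z a \<in> vecs N" using a z by simp
  have p1: "pp par (vadd z a) i = (odd (qq N i (vadd z a)) \<noteq> (s (vadd z a) \<noteq> s (vadd (vadd z a) (unitv i))))"
    by (rule pdecomp[OF za i])
  have p2: "pp par z i = (odd (qq N i z) \<noteq> (s z \<noteq> s (vadd z (unitv i))))"
    by (rule pdecomp[OF z i])
  have q: "odd (qq N i (vadd z a)) = (odd (qq N i z) \<noteq> odd (qq N i a))" by (rule qq_add)
  have b: "odd (BB N (vadd z (unitv i)) a) = (odd (BB N z a) \<noteq> odd (qq N i a))"
    using BB_add1[of N z "unitv i" a] BB_e[OF i] by simp
  have comm: "vadd (vadd z (unitv i)) a = vadd (vadd z a) (unitv i)" by (simp add: vadd_ac)
  show ?thesis unfolding G_def comm p1 p2 q b by argo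
qed

lemma U:
  assumes c: "c \<in> C" and w: "w \<in> vecs N"
  shows "(s w \<noteq> s (vadd w c)) = ((s vzero \<noteq> s c) \<noteq> odd (BB N w c))"
proof -
  have cv: "c \<in> vecs N" using c C_sub by blast
  define f where "f w = ((s w \<noteq> s (vadd w c)) \<noteq> odd (BB N w c))" for w
  have "f w = f vzero"
  proof (rule vecs_const[OF vecs_zero w])
    fix z i assume z: "z \<in> vecs N" and i: "i \<in> {1..N}"
    have zc: "vadd z c \<in> vecs N" using z cv by simp
    have p1: "pp par (vadd z c) i = (odd (qq N i (vadd z c)) \<noteq> (s (vadd z c) \<noteq> s (vadd (vadd z c) (unitv i))))"
      by (rule pdecomp[OF zc i])
    have p2: "pp par z i = (odd (qq N i z) \<noteq> (s z \<noteq> s (vadd z (unitv i))))"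
      by (rule pdecomp[OF z i])
    have pc: "pp par (vadd z c) i = pp par z i" by (rule pp_compat[OF z i c])
    have q: "odd (qq N i (vadd z c)) = (odd (qq N i z) \<noteq> odd (qq N i c))" by (rule qq_add)
    have b: "odd (BB N (vadd z (unitv i)) c) = (odd (BB N z c) \<noteq> odd (qq N i c))"
      using BB_add1[of N z "unitv i" c] BB_e[OF i] by simp
    have comm: "vadd (vadd z (unitv i)) c = vadd (vadd z c) (unitv i)" by (simp add: vadd_ac)
    show "f (vadd z (unitv i)) = f z" unfolding f_def comm b using p1 p2 pc q by argo
  qed
  moreover have "f vzero = (s vzero \<noteq> s c)" by (simp add: f_def BB_zero)
  ultimately show ?thesis unfolding f_def by argo
qed

lemma F2:
  assumes c: "c \<in> C" and a: "a \<in> vecs N" and z: "z \<in> vecs N"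
  shows "(G a (vadd z c) \<noteq> G a z) = odd (card {i\<in>{1..N}. a i \<and> c i})"
proof -
  have za: "vadd z a \<in> vecs N" using a z by simp
  have u1: "(s (vadd z a) \<noteq> s (vadd (vadd z a) c)) = ((s vzero \<noteq> s c) \<noteq> odd (BB N (vadd z a) c))"
    by (rule U[OF c za])
  have u2: "(s z \<noteq> s (vadd z c)) = ((s vzero \<noteq> s c) \<noteq> odd (BB N z c))"
    by (rule U[OF c z])
  have b1: "odd (BB N (vadd z c) a) = (odd (BB N z a) \<noteq> odd (BB N c a))" by (rule BB_add1)
  have b2: "odd (BB N (vadd z a) c) = (odd (BB N z c) \<noteq> odd (BB N a c))" by (rule BB_add1)
  have sw: "(odd (BB N c a) \<noteq> odd (BB N a c)) = odd (card {i\<in>{1..N}. a i \<and> c i})"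
    by (rule BB_swap[OF C_even[OF c]])
  have comm: "vadd (vadd z c) a = vadd (vadd z a) c" by (simp add: vadd_ac)
  show ?thesis unfolding G_def comm using u1 u2 b1 b2 sw by argo
qed

end

context adk begin

abbreviation V where "V \<equiv> quot_V N C"
abbreviation EE where "EE \<equiv> quot_E N C"

lemma V_cases: "W \<in> V \<Longrightarrow> \<exists>z\<in>vecs N. W = coset C z"
  unfolding quot_V_def by blast

lemma coset_in_V: "z \<in> vecs N \<Longrightarrow> coset C z \<in> V"
  unfolding quot_V_def by blast

lemma if_dir:
  assumes x: "x \<in> vecs N" and y: "y \<in> vecs N"
    and H: "\<forall>c\<in>C. even (card {i\<in>{1..N}. vadd x y i \<and> c i})"
  shows "\<exists>\<sigma>. aut_disregarding_coloring V EE (quot_col N C) (quot_par N C par) \<sigma> \<and> \<sigma> (coset C x) = coset C y"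
proof -
  define a where "a = vadd x y"
  have a: "a \<in> vecs N" using x y by (simp add: a_def)
  define \<sigma> where "\<sigma> W = (\<lambda>v. vadd v a) ` W" for W
  have sc: "\<sigma> (coset C z) = coset C (vadd z a)" for z
  proof -
    have "\<sigma> (coset C z) = (\<lambda>c. vadd (vadd z c) a) ` C" unfolding \<sigma>_def coset_def by (simp add: image_image)
    also have "(\<lambda>c. vadd (vadd z c) a) = (\<lambda>c. vadd (vadd z a) c)" by (simp add: vadd_ac)
    finally show ?thesis unfolding coset_def .
  qed
  have ss: "\<sigma> (\<sigma> W) = W" for W unfolding \<sigma>_def by (simp add: image_image)
  have sV: "\<sigma> W \<in> V" if "W \<in> V" for W
    using that V_cases sc coset_in_V a by fastforce
  have bij: "bij_betw \<sigma> V V"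
    by (rule bij_betw_byWitness[where f'=\<sigma>]) (use ss sV in auto)
  have simg: "\<sigma> ` {A, B} = {\<sigma> A, \<sigma> B}" for A B by simp
  have sedge: "\<sigma> ` {coset C z, coset C (vadd z (unitv i))} = {coset C (vadd z a), coset C (vadd (vadd z a) (unitv i))}" for z i
    by (simp add: sc vadd_ac)
  have sE: "\<sigma> ` ed \<in> EE \<and> quot_col N C (\<sigma> ` ed) = quot_col N C ed" if edin: "ed \<in> EE" for ed
  proof -
    obtain z i where z: "z \<in> vecs N" and i: "i \<in> {1..N}" and ed: "ed = {coset C z, coset C (vadd z (unitv i))}"
      using quot_E_cases[OF edin] by blast
    have za: "vadd z a \<in> vecs N" using z a by simp
    show ?thesis unfolding ed sedge using quot_E_edge[OF za i] quot_col_eq[OF i za] quot_col_eq[OF i z] by simp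
  qed
  have adj: "\<forall>u\<in>V. \<forall>v\<in>V. {\<sigma> u, \<sigma> v} \<in> EE \<longleftrightarrow> {u,v} \<in> EE"
  proof (intro ballI iffI)
    fix u v assume "{\<sigma> u, \<sigma> v} \<in> EE"
    then have "\<sigma> ` {\<sigma> u, \<sigma> v} \<in> EE" using sE by blast
    then show "{u,v} \<in> EE" by (simp add: ss)
  next
    fix u v assume "{u, v} \<in> EE"
    then have "\<sigma> ` {u, v} \<in> EE" using sE by blast
    then show "{\<sigma> u, \<sigma> v} \<in> EE" by simp
  qed
  have col: "\<forall>ed\<in>EE. quot_col N C (\<sigma> ` ed) = quot_col N C ed" using sE by blast
  define S where "S = {W\<in>V. \<exists>z\<in>vecs N. W = coset C z \<and> G a (vadd z a)}"
  have memS: "(coset C z \<in> S) = G a (vadd z a)" if z: "z \<in> vecs N" for z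
  proof
    assume "coset C z \<in> S"
    then obtain z' where z': "z' \<in> vecs N" "coset C z = coset C z'" "G a (vadd z' a)" unfolding S_def by blast
    define c where "c = vadd z' z"
    have c: "c \<in> C" using z' by (simp add: c_def coset_eq vadd_ac)
    have z'a: "vadd z' a \<in> vecs N" using z' a by simp
    have "vadd z a = vadd (vadd z' a) c" by (simp add: c_def vadd_ac)
    then have "(G a (vadd z a) \<noteq> G a (vadd z' a)) = odd (card {i\<in>{1..N}. a i \<and> c i})"
      using F2[OF c a z'a] by simp
    moreover have "even (card {i\<in>{1..N}. a i \<and> c i})" using H c by (simp add: a_def)
    ultimately show "G a (vadd z a)" using z' by simp
  next
    assume "G a (vadd z a)"
    then show "coset C z \<in> S" unfolding S_def using z coset_in_V by blast
  qed
  have SV: "S \<subseteq> V" unfolding S_def by blast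
  have parc: "\<forall>ed\<in>EE. (quot_par N C par (\<sigma> ` ed) \<noteq> odd (card (\<sigma> ` ed \<inter> S))) = quot_par N C par ed"
  proof
    fix ed assume "ed \<in> EE"
    then obtain z i where z: "z \<in> vecs N" and i: "i \<in> {1..N}" and ed: "ed = {coset C z, coset C (vadd z (unitv i))}"
      using quot_E_cases by blast
    have za: "vadd z a \<in> vecs N" using z a by simp
    have zai: "vadd (vadd z a) (unitv i) \<in> vecs N" using za i by simp
    have zi: "vadd z (unitv i) \<in> vecs N" using z i by simp
    have qp1: "quot_par N C par (\<sigma> ` ed) = pp par (vadd z a) i"
      unfolding ed sedge by (rule quot_par_eq[OF za i])
    have qp2: "quot_par N C par ed = pp par z i" unfolding ed by (rule quot_par_eq[OF z i])
    have cS: "odd (card (\<sigma> ` ed \<inter> S)) = (G a z \<noteq> G a (vadd z (unitv i)))"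
    proof -
      have "odd (card (\<sigma> ` ed \<inter> S)) = ((coset C (vadd z a) \<in> S) \<noteq> (coset C (vadd (vadd z a) (unitv i)) \<in> S))"
        unfolding ed sedge by (rule card2_odd[OF coset_edge_neq[OF i]])
      also have "\<dots> = (G a z \<noteq> G a (vadd z (unitv i)))"
        using memS[OF za] memS[OF zai] by (simp add: vadd_ac)
      finally show ?thesis .
    qed
    show "(quot_par N C par (\<sigma> ` ed) \<noteq> odd (card (\<sigma> ` ed \<inter> S))) = quot_par N C par ed"
      unfolding qp1 qp2 cS using F1[OF a z i] by argo
  qed
  have aut: "aut_disregarding_coloring V EE (quot_col N C) (quot_par N C par) \<sigma>"
    unfolding aut_disregarding_coloring_def using bij adj col parc SV by blast
  have "\<sigma> (coset C x) = coset C y" by (simp add: sc a_def)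
  then show ?thesis using aut by blast
qed


lemma onlyif_dir:
  assumes x: "x \<in> vecs N" and y: "y \<in> vecs N"
    and aut: "aut_disregarding_coloring V EE (quot_col N C) (quot_par N C par) \<sigma>"
    and sx: "\<sigma> (coset C x) = coset C y"
  shows "\<forall>c\<in>C. even (card {i\<in>{1..N}. vadd x y i \<and> c i})"
proof -
  define a where "a = vadd x y"
  have a: "a \<in> vecs N" using x y by (simp add: a_def)
  have adj: "\<forall>u\<in>V. \<forall>v\<in>V. {\<sigma> u, \<sigma> v} \<in> EE \<longleftrightarrow> {u,v} \<in> EE"
    and col: "\<forall>ed\<in>EE. quot_col N C (\<sigma> ` ed) = quot_col N C ed"
    using aut unfolding aut_disregarding_coloring_def by blast+
  obtain S where SV: "S \<subseteq> V" and parc: "\<forall>ed\<in>EE. (quot_par N C par (\<sigma> ` ed) \<noteq> odd (card (\<sigma> ` ed \<inter> S))) = quot_par N C par ed"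
    using aut unfolding aut_disregarding_coloring_def by blast
  have T: "\<sigma> (coset C z) = coset C (vadd z a)" if z: "z \<in> vecs N" for z
  proof (rule vecs_induct[OF x _ _ z])
    show "\<sigma> (coset C x) = coset C (vadd x a)" using sx by (simp add: a_def)
  next
    fix z i assume z: "z \<in> vecs N" and i: "i \<in> {1..N}" and hz: "\<sigma> (coset C z) = coset C (vadd z a)"
    have zi: "vadd z (unitv i) \<in> vecs N" using z i by simp
    define ed where "ed = {coset C z, coset C (vadd z (unitv i))}"
    have edE: "ed \<in> EE" unfolding ed_def by (rule quot_E_edge[OF z i])
    have "{\<sigma> (coset C z), \<sigma> (coset C (vadd z (unitv i)))} \<in> EE"
      using adj coset_in_V[OF z] coset_in_V[OF zi] edE unfolding ed_def by blast
    then obtain w j where w: "w \<in> vecs N" and j: "j \<in> {1..N}"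
      and wj: "{\<sigma> (coset C z), \<sigma> (coset C (vadd z (unitv i)))} = {coset C w, coset C (vadd w (unitv j))}"
      using quot_E_cases by blast
    have c1: "quot_col N C (\<sigma> ` ed) = quot_col N C ed" using col edE by blast
    have "quot_col N C (\<sigma> ` ed) = i" using c1 quot_col_eq[OF i z] unfolding ed_def by simp
    then have "quot_col N C {coset C w, coset C (vadd w (unitv j))} = i" using wj unfolding ed_def by simp
    then have ji: "j = i" using quot_col_eq[OF j w] by simp
    have comm: "vadd (vadd z (unitv i)) a = vadd (vadd z a) (unitv i)" by (simp add: vadd_ac)
    from wj ji have "(\<sigma> (coset C z) = coset C w \<and> \<sigma> (coset C (vadd z (unitv i))) = coset C (vadd w (unitv i))) \<or>
      (\<sigma> (coset C z) = coset C (vadd w (unitv i)) \<and> \<sigma> (coset C (vadd z (unitv i))) = coset C w)"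
      by (simp add: doubleton_eq_iff)
    then show "\<sigma> (coset C (vadd z (unitv i))) = coset C (vadd (vadd z (unitv i)) a)"
    proof
      assume h: "\<sigma> (coset C z) = coset C w \<and> \<sigma> (coset C (vadd z (unitv i))) = coset C (vadd w (unitv i))"
      then have "coset C (vadd z a) = coset C w" using hz by simp
      then have "coset C (vadd (vadd z a) (unitv i)) = coset C (vadd w (unitv i))" by (rule coset_shift)
      then show ?thesis using h comm by simp
    next
      assume h: "\<sigma> (coset C z) = coset C (vadd w (unitv i)) \<and> \<sigma> (coset C (vadd z (unitv i))) = coset C w"
      then have "coset C (vadd z a) = coset C (vadd w (unitv i))" using hz by simp
      then have "coset C (vadd (vadd z a) (unitv i)) = coset C (vadd (vadd w (unitv i)) (unitv i))" by (rule coset_shift)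
      then show ?thesis using h comm by simp
    qed
  qed
  define G' where "G' z = (coset C (vadd z a) \<in> S)" for z
  define f where "f z = (G a z \<noteq> G' z)" for z
  have fc: "f z = f x" if z: "z \<in> vecs N" for z
  proof (rule vecs_const[OF x z])
    fix w i assume w: "w \<in> vecs N" and i: "i \<in> {1..N}"
    have wi: "vadd w (unitv i) \<in> vecs N" using w i by simp
    have wa: "vadd w a \<in> vecs N" using w a by simp
    define ed where "ed = {coset C w, coset C (vadd w (unitv i))}"
    have edE: "ed \<in> EE" unfolding ed_def by (rule quot_E_edge[OF w i])
    have comm: "vadd (vadd w (unitv i)) a = vadd (vadd w a) (unitv i)" by (simp add: vadd_ac)
    have sed: "\<sigma> ` ed = {coset C (vadd w a), coset C (vadd (vadd w a) (unitv i))}"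
      unfolding ed_def using T[OF w] T[OF wi] comm by simp
    have q1: "quot_par N C par (\<sigma> ` ed) = pp par (vadd w a) i" unfolding sed by (rule quot_par_eq[OF wa i])
    have q2: "quot_par N C par ed = pp par w i" unfolding ed_def by (rule quot_par_eq[OF w i])
    have cS: "odd (card (\<sigma> ` ed \<inter> S)) = (G' w \<noteq> G' (vadd w (unitv i)))"
      unfolding sed G'_def comm by (rule card2_odd[OF coset_edge_neq[OF i]])
    have "(pp par (vadd w a) i \<noteq> (G' w \<noteq> G' (vadd w (unitv i)))) = pp par w i"
      using parc edE q1 q2 cS by metis
    then show "f (vadd w (unitv i)) = f w" unfolding f_def using F1[OF a w i] by argo
  qed
  show ?thesis
  proof
    fix c assume c: "c \<in> C"
    have cv: "c \<in> vecs N" using c C_sub by blast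
    have xc: "vadd x c \<in> vecs N" using x cv by simp
    have "vadd (vadd (vadd x c) a) (vadd x a) = c" by (simp add: vadd_ac)
    then have "coset C (vadd (vadd x c) a) = coset C (vadd x a)" using c by (simp add: coset_eq)
    then have "G' (vadd x c) = G' x" by (simp add: G'_def)
    moreover have "f (vadd x c) = f x" by (rule fc[OF xc])
    ultimately have "G a (vadd x c) = G a x" unfolding f_def by argo
    then show "even (card {i\<in>{1..N}. vadd x y i \<and> c i})"
      using F2[OF c a x] by (simp add: a_def)
  qed
qed

end

theorem mainTheorem5:
  fixes N k :: nat
    and C :: "(nat \<Rightarrow> bool) set"
    and par :: "(nat \<Rightarrow> bool) set \<Rightarrow> bool"
    and boson :: "(nat \<Rightarrow> bool) \<Rightarrow> bool" and hgt :: "(nat \<Rightarrow> bool) \<Rightarrow> int"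
    and D :: "(nat \<Rightarrow> bool) list"
    and x y :: "nat \<Rightarrow> bool"
  assumes code: "doubly_even_code N k C"
    and cube: "is_adinkra N (vecs N) (cube_E N) (cube_col N) par boson hgt"
    and compat: "parity_compatible N C par"
    and quot_adinkra: "\<exists>boson' hgt'. is_adinkra N (quot_V N C) (quot_E N C) (quot_col N C)
                          (quot_par N C par) boson' hgt'"
    and card_V: "card (quot_V N C) = 2 ^ (N - k)"
    and D: "standard_form_gen N k C D"
    and x: "x \<in> vecs N" and y: "y \<in> vecs N"
  shows "(\<exists>\<sigma>. aut_disregarding_coloring (quot_V N C) (quot_E N C) (quot_col N C)
                 (quot_par N C par) \<sigma> \<and> \<sigma> (coset C x) = coset C y)
         \<longleftrightarrow> (\<forall>c\<in>set D. ip N x c = ip N y c)"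
proof -
  interpret adk N k C par boson hgt using code cube compat by unfold_locales
  have DC: "set D \<subseteq> C" and span: "z2_span (set D) = C"
    using D unfolding standard_form_gen_def by auto
  show ?thesis
  proof
    assume "\<exists>\<sigma>. aut_disregarding_coloring (quot_V N C) (quot_E N C) (quot_col N C)
                 (quot_par N C par) \<sigma> \<and> \<sigma> (coset C x) = coset C y"
    then obtain \<sigma> where "aut_disregarding_coloring (quot_V N C) (quot_E N C) (quot_col N C) (quot_par N C par) \<sigma>"
      and "\<sigma> (coset C x) = coset C y" by blast
    then have "\<forall>c\<in>C. even (card {i\<in>{1..N}. vadd x y i \<and> c i})" using onlyif_dir x y by blast
    then show "\<forall>c\<in>set D. ip N x c = ip N y c" using DC ip_iff by blast
  next
    assume h: "\<forall>c\<in>set D. ip N x c = ip N y c"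
    have hD: "\<forall>v\<in>set D. even (card {i\<in>{1..N}. vadd x y i \<and> v i})" using h ip_iff by blast
    have "\<forall>c\<in>C. even (card {i\<in>{1..N}. vadd x y i \<and> c i})"
    proof
      fix c assume "c \<in> C"
      then obtain S where S: "S \<subseteq> set D" and cS: "c = vsum S" using span unfolding z2_span_def by blast
      have fS: "finite S" using S finite_subset by blast
      have "\<forall>v\<in>S. even (card {i\<in>{1..N}. vadd x y i \<and> v i})" using hD S by blast
      then show "even (card {i\<in>{1..N}. vadd x y i \<and> c i})" unfolding cS by (rule even_span[OF fS])
    qed
    then show "\<exists>\<sigma>. aut_disregarding_coloring (quot_V N C) (quot_E N C) (quot_col N C)
                 (quot_par N C par) \<sigma> \<and> \<sigma> (coset C x) = coset C y"
      by (rule if_dir[OF x y])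
  qed
qed

end
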